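(* Let $\mathbb{K}\in\{\mathbb{R},\mathbb{C},\mathbb{H}\}$, $d(\mathbb{K})=1,2,4$ respectively, and $S(\mathbb{K})$ the group of elements of norm $1$ in $\mathbb{K}$ (so $\mathbb{Z}_2$, $U(1)$, $\mathrm{Sp}(1)$). For $k\geqslant 2$ let $S(\mathbb{K})^{k-1}$ act linearly on $\mathbb{K}^k$ by \[ (g_1,\ldots,g_{k-1})\cdot(q_1,\ldots,q_k)=(q_1g_1^{-1},\,g_1q_2g_2^{-1},\,\ldots,\,g_{k-2}q_{k-1}g_{k-1}^{-1},\,g_{k-1}q_k). \] Then the orbit space $\mathbb{K}^k/S(\mathbb{K})^{k-1}$ is homeomorphic to $\mathbb{R}^{d(\mathbb{K})+k-1}$. *)

theory Defs
  imports "HOL-Analysis.Analysis"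
begin

definition Kspace :: "nat \<Rightarrow> (nat \<Rightarrow> 'a::{topological_space,zero}) topology"
  where "Kspace k = subtopology (product_topology (\<lambda>i. euclidean) UNIV) {x. \<forall>i\<ge>k. x i = 0}"

section \<open>Quaternions H, realised as R^4 = real \<times> real \<times> real \<times> real
  with the Hamilton product (a + b i + c j + d k)\<close>

type_synonym quat = "real \<times> real \<times> real \<times> real"

definition qmult :: "quat \<Rightarrow> quat \<Rightarrow> quat" where
  "qmult p q = (case p of (a1, b1, c1, d1) \<Rightarrow> case q of (a2, b2, c2, d2) \<Rightarrow>
     (a1*a2 - b1*b2 - c1*c2 - d1*d2,
      a1*b2 + b1*a2 + c1*d2 - d1*c2,
      a1*c2 - b1*d2 + c1*a2 + d1*b2,
      a1*d2 + b1*c2 - c1*b2 + d1*a2))"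

definition qinv :: "quat \<Rightarrow> quat" where
  "qinv q = (case q of (a, b, c, d) \<Rightarrow>
     let n = a^2 + b^2 + c^2 + d^2 in (a / n, - b / n, - c / n, - d / n))"

text \<open>With 0-based indices, g 0, ..., g (k-2) are g_1, ..., g_(k-1), and
  (g . q) i = g_(i) q_i g_(i+1)^(-1) in 1-based notation, with the missing
  factors at both ends omitted.\<close>

definition chain_action ::
  "('a \<Rightarrow> 'a \<Rightarrow> 'a) \<Rightarrow> ('a \<Rightarrow> 'a) \<Rightarrow> nat \<Rightarrow> (nat \<Rightarrow> 'a) \<Rightarrow> (nat \<Rightarrow> 'a) \<Rightarrow> (nat \<Rightarrow> 'a)"
  where "chain_action mul ginv k g q = (\<lambda>i.
     if i < k then
       (let l = (if i = 0 then q i else mul (g (i - 1)) (q i))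
        in if i = k - 1 then l else mul l (ginv (g i)))
     else q i)"

definition orbit_rel ::
  "('a \<Rightarrow> 'a \<Rightarrow> 'a) \<Rightarrow> ('a \<Rightarrow> 'a) \<Rightarrow> 'a set \<Rightarrow> nat \<Rightarrow> (nat \<Rightarrow> 'a::{topological_space,zero}) rel"
  where "orbit_rel mul ginv S k =
     {(p, q). p \<in> topspace (Kspace k) \<and>
        (\<exists>g. (\<forall>i < k - 1. g i \<in> S) \<and> q = chain_action mul ginv k g p)}"

definition quotient_topology :: "'a topology \<Rightarrow> 'a rel \<Rightarrow> 'a set topology"
  where "quotient_topology X R =
     topology (\<lambda>U. U \<subseteq> topspace X // R \<and> openin X (\<Union>U))"

definition orbit_space ::
  "('a \<Rightarrow> 'a \<Rightarrow> 'a) \<Rightarrow> ('a \<Rightarrow> 'a) \<Rightarrow> 'a set \<Rightarrow> nat \<Rightarrow> (nat \<Rightarrow> 'a::{topological_space,zero}) set topology"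
  where "orbit_space mul ginv S k = quotient_topology (Kspace k) (orbit_rel mul ginv S k)"

end

theory Submission
  imports Defs
begin



lemma quot_homeo:
  assumes qm: "quotient_map X Y f"
  and R: "R = {(x,y). x \<in> topspace X \<and> y \<in> topspace X \<and> f x = f y}"
  shows "quotient_topology X R homeomorphic_space Y"
proof -
  define T where "T = topspace X"
  have eqv: "equiv T R" unfolding R T_def equiv_def refl_on_def sym_def trans_def by auto
  define P where "P = (\<lambda>U. U \<subseteq> T // R \<and> openin X (\<Union>U))"
  have UI: "\<Union>(U \<inter> V) = \<Union>U \<inter> \<Union>V" if "U \<subseteq> T // R" "V \<subseteq> T // R" for U V
  proof
    show "\<Union>U \<inter> \<Union>V \<subseteq> \<Union>(U \<inter> V)"
    proof
      fix x assume "x \<in> \<Union>U \<inter> \<Union>V"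
      then obtain a b where ab: "a \<in> U" "b \<in> V" "x \<in> a" "x \<in> b" by blast
      have "a = b" using quotient_disj[OF eqv, of a b] that ab by blast
      then show "x \<in> \<Union>(U \<inter> V)" using ab by blast
    qed
  qed blast
  have ist: "istopology P"
    unfolding istopology_def
  proof (intro conjI)
    show "\<forall>S U. P S \<longrightarrow> P U \<longrightarrow> P (S \<inter> U)"
      unfolding P_def using UI by auto
    show "\<forall>K. (\<forall>U\<in>K. P U) \<longrightarrow> P (\<Union>K)"
    proof (intro allI impI)
      fix K assume K: "\<forall>U\<in>K. P U"
      have e: "\<Union>(\<Union>K) = \<Union>((\<lambda>U. \<Union>U) ` K)" by auto
      have "openin X (\<Union>((\<lambda>U. \<Union>U) ` K))"
        by (rule openin_Union) (use K P_def in blast)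
      then show "P (\<Union>K)" using K unfolding P_def e by auto
    qed
  qed
  define Q where "Q = quotient_topology X R"
  have oQ: "openin Q = P" unfolding Q_def quotient_topology_def P_def[symmetric] T_def[symmetric]
    using ist by simp
  have tQ: "topspace Q = T // R"
  proof -
    have "P (T // R)" unfolding P_def using Union_quotient[OF eqv] T_def by auto
    then show ?thesis unfolding topspace_def oQ P_def by auto
  qed
  define pi where "pi = (\<lambda>x. R `` {x})"
  have qpi: "quotient_map X Q pi"
    unfolding quotient_map_def
  proof (intro conjI allI impI)
    show "pi ` topspace X = topspace Q" unfolding tQ pi_def quotient_def T_def by auto
    fix U assume U: "U \<subseteq> topspace Q"
    have "{x \<in> topspace X. pi x \<in> U} = \<Union>U"
    proof
      show "{x \<in> topspace X. pi x \<in> U} \<subseteq> \<Union> U"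
      proof
        fix x assume "x \<in> {x \<in> topspace X. pi x \<in> U}"
        then show "x \<in> \<Union>U" using equiv_class_self[OF eqv, of x] unfolding pi_def T_def by blast
      qed
      show "\<Union> U \<subseteq> {x \<in> topspace X. pi x \<in> U}"
      proof
        fix x assume "x \<in> \<Union>U"
        then obtain c where c: "c \<in> U" "x \<in> c" by blast
        then obtain z where z: "z \<in> T" "c = R``{z}" using U tQ by (auto elim: quotientE)
        then have "(z,x) \<in> R" using c by auto
        then have "R``{x} = c" using z equiv_class_eq[OF eqv] by auto
        moreover have "x \<in> T" using \<open>(z,x) \<in> R\<close> R T_def by auto
        ultimately show "x \<in> {x \<in> topspace X. pi x \<in> U}" using c unfolding pi_def T_def by auto
      qed
    qed
    then show "openin X {x \<in> topspace X. pi x \<in> U} = openin Q U"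
      using U unfolding oQ P_def tQ by auto
  qed
  have cf: "continuous_map X Y f" using qm quotient_imp_continuous_map by blast
  have cpi: "continuous_map X Q pi" using qpi quotient_imp_continuous_map by blast
  obtain g where g: "continuous_map Q Y g" "\<And>x. x \<in> topspace X \<Longrightarrow> g (pi x) = f x"
  proof (rule quotient_map_lift_exists[OF qpi cf])
    fix x y assume "x \<in> topspace X" "y \<in> topspace X" "pi x = pi y"
    then show "f x = f y" unfolding pi_def using eq_equiv_class_iff[OF eqv] T_def R by auto
  qed auto
  obtain h where h: "continuous_map Y Q h" "\<And>x. x \<in> topspace X \<Longrightarrow> h (f x) = pi x"
  proof (rule quotient_map_lift_exists[OF qm cpi])
    fix x y assume "x \<in> topspace X" "y \<in> topspace X" "f x = f y"
    then show "pi x = pi y" unfolding pi_def using eq_equiv_class_iff[OF eqv] T_def R by auto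
  qed auto
  have "homeomorphic_maps Q Y g h"
    unfolding homeomorphic_maps_def
  proof (intro conjI ballI g h)
    fix c assume "c \<in> topspace Q"
    then obtain x where "x \<in> topspace X" "c = pi x" using qpi quotient_imp_surjective_map by blast
    then show "h (g c) = c" using g h by auto
  next
    fix y assume "y \<in> topspace Y"
    then obtain x where "x \<in> topspace X" "y = f x" using qm quotient_imp_surjective_map by blast
    then show "g (h y) = y" using g h by auto
  qed
  then show ?thesis unfolding Q_def homeomorphic_space_def by blast
qed




locale chainK =
  fixes mul :: "'a::euclidean_space \<Rightarrow> 'a \<Rightarrow> 'a" and ginv :: "'a \<Rightarrow> 'a" and e :: 'a
    and d :: nat and enc :: "'a \<Rightarrow> nat \<Rightarrow> real" and dec :: "(nat \<Rightarrow> real) \<Rightarrow> 'a"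
    and k :: nat
  assumes bil: "bounded_bilinear mul"
  and assoc: "mul (mul a b) c = mul a (mul b c)"
  and mul_e_left [simp]: "mul e x = x" and mul_e_right [simp]: "mul x e = x"
  and norm_e [simp]: "norm e = 1"
  and inv_r: "norm g = 1 \<Longrightarrow> mul g (ginv g) = e"
  and inv_l: "norm g = 1 \<Longrightarrow> mul (ginv g) g = e"
  and norm_inv: "norm g = 1 \<Longrightarrow> norm (ginv g) = 1"
  and norm_mul: "norm (mul a b) = norm a * norm b"
  and enc_cont: "continuous_on UNIV (\<lambda>x. enc x i)"
  and enc_supp: "d \<le> i \<Longrightarrow> enc x i = 0"
  and enc_dec: "(\<forall>i\<ge>d. y i = 0) \<Longrightarrow> enc (dec y) = y"
  and dec_enc: "dec (enc x) = x"
  and dec_bound: "norm (dec y) \<le> (\<Sum>i<d. \<bar>y i\<bar>)"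
  and k2: "2 \<le> k"
begin

lemma mul_scale_l [simp]: "mul (c *\<^sub>R a) b = c *\<^sub>R mul a b"
  using bil by (simp add: bounded_bilinear.scaleR_left)
lemma mul_scale_r [simp]: "mul a (c *\<^sub>R b) = c *\<^sub>R mul a b"
  using bil by (simp add: bounded_bilinear.scaleR_right)
lemma mul_0_l [simp]: "mul 0 b = 0"
  using bil by (simp add: bounded_bilinear.zero_left)
lemma mul_0_r [simp]: "mul a 0 = 0"
  using bil by (simp add: bounded_bilinear.zero_right)

lemma inv_l' [simp]: "norm g = 1 \<Longrightarrow> mul (ginv g) (mul g x) = x"
  by (metis assoc inv_l mul_e_left)
lemma inv_r' [simp]: "norm g = 1 \<Longrightarrow> mul g (mul (ginv g) x) = x"
  by (metis assoc inv_r mul_e_left)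
lemma inv_l2 [simp]: "norm g = 1 \<Longrightarrow> mul (ginv g) g = e" by (rule inv_l)
lemma inv_r2 [simp]: "norm g = 1 \<Longrightarrow> mul g (ginv g) = e" by (rule inv_r)
lemma ginv_e [simp]: "ginv e = e"
  by (metis inv_r mul_e_left norm_e)
lemma ginv_mul: assumes "norm h = 1" "norm g = 1"
  shows "ginv (mul h g) = mul (ginv g) (ginv h)"
proof -
  have n: "norm (mul h g) = 1" using assms by (simp add: norm_mul)
  have "ginv (mul h g) = mul (ginv g) (mul (ginv h) (mul (mul h g) (ginv (mul h g))))"
    using assms n by (simp add: assoc)
  also have "\<dots> = mul (ginv g) (ginv h)" using n by simp
  finally show ?thesis .
qed

definition unit :: "'a \<Rightarrow> 'a" where
  "unit x = (if x = 0 then e else (1 / norm x) *\<^sub>R x)"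

lemma norm_unit [simp]: "norm (unit x) = 1"
  by (simp add: unit_def)

lemma unit_decomp: "x = norm x *\<^sub>R unit x"
  by (simp add: unit_def)

lemma mul_ginv_unit: "mul x (ginv (unit x)) = norm x *\<^sub>R e"
proof -
  have "mul x (ginv (unit x)) = mul (norm x *\<^sub>R unit x) (ginv (unit x))"
    using unit_decomp by metis
  then show ?thesis by simp
qed

lemma mul_ginv_unit': "mul (ginv (unit x)) x = norm x *\<^sub>R e"
proof -
  have "mul (ginv (unit x)) x = mul (ginv (unit x)) (norm x *\<^sub>R unit x)"
    using unit_decomp by metis
  then show ?thesis by simp
qed

definition act :: "(nat \<Rightarrow> 'a) \<Rightarrow> (nat \<Rightarrow> 'a) \<Rightarrow> nat \<Rightarrow> 'a" where
  "act g q = chain_action mul ginv k g q"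

definition Kset :: "(nat \<Rightarrow> 'a) set" where "Kset = {x. \<forall>i\<ge>k. x i = 0}"

definition goodg :: "(nat \<Rightarrow> 'a) \<Rightarrow> bool" where "goodg g \<longleftrightarrow> (\<forall>i<k-1. norm (g i) = 1)"

lemma act_eq: "act g q i =
   (if i < k then
       (if i = 0 then (if i = k - 1 then q i else mul (q i) (ginv (g i)))
        else (if i = k - 1 then mul (g (i - 1)) (q i) else mul (mul (g (i - 1)) (q i)) (ginv (g i))))
    else q i)"
  by (simp add: act_def chain_action_def Let_def)

lemma act_norm: assumes "goodg g" "i < k" shows "norm (act g q i) = norm (q i)"
  using assms k2 unfolding goodg_def act_eq by (auto simp: norm_mul norm_inv)

lemma act_Kset: "q \<in> Kset \<Longrightarrow> act g q \<in> Kset"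
  unfolding Kset_def act_eq by auto

lemma act_id: "q \<in> Kset \<Longrightarrow> act (\<lambda>_. e) q = q"
  unfolding Kset_def act_eq by (auto simp: fun_eq_iff)

lemma act_inv: assumes "goodg g" shows "act (\<lambda>i. ginv (g i)) (act g q) = q"
proof
  fix i
  show "act (\<lambda>i. ginv (g i)) (act g q) i = q i"
  proof (cases "i < k")
    case True
    then show ?thesis using assms k2 unfolding goodg_def act_eq
      by (auto simp: assoc norm_inv)
  next
    case False
    then show ?thesis unfolding act_eq by auto
  qed
qed

lemma goodg_inv: "goodg g \<Longrightarrow> goodg (\<lambda>i. ginv (g i))"
  unfolding goodg_def by (auto simp: norm_inv)

lemma goodg_comp: "goodg g \<Longrightarrow> goodg h \<Longrightarrow> goodg (\<lambda>i. mul (h i) (g i))"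
  unfolding goodg_def by (auto simp: norm_mul)

lemma act_comp: assumes "goodg g" "goodg h"
  shows "act h (act g q) = act (\<lambda>i. mul (h i) (g i)) q"
proof
  fix i
  show "act h (act g q) i = act (\<lambda>i. mul (h i) (g i)) q i"
  proof (cases "i < k")
    case True
    then show ?thesis using assms k2 unfolding goodg_def act_eq
      by (auto simp: assoc ginv_mul)
  next
    case False
    then show ?thesis unfolding act_eq by auto
  qed
qed

end


context chainK begin

primrec Pk :: "nat \<Rightarrow> (nat \<Rightarrow> 'a) \<Rightarrow> 'a" where
  "Pk 0 q = e"
| "Pk (Suc m) q = mul (Pk m q) (q m)"

lemma act_Suc: "Suc j < k \<Longrightarrow> act g q (Suc j) = (if Suc j = k - 1 then mul (g j) (q (Suc j)) else mul (mul (g j) (q (Suc j))) (ginv (g (Suc j))))"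
  apply (simp add: act_eq, intro impI)
  apply (subgoal_tac "k - Suc (Suc 0) = j")
   apply simp
  apply arith
  done

lemma act_Pk_aux: assumes "goodg g" "m < k"
  shows "Pk (Suc m) (act g q) = (if m = k - 1 then Pk (Suc m) q else mul (Pk (Suc m) q) (ginv (g m)))"
  using assms(2)
proof (induction m)
  case 0
  then show ?case using k2 by (simp add: act_eq)
next
  case (Suc m)
  then have "m < k - 1" by auto
  then have gm: "norm (g m) = 1" using assms(1) goodg_def by auto
  have IH: "Pk (Suc m) (act g q) = mul (Pk (Suc m) q) (ginv (g m))"
    using Suc \<open>m < k - 1\<close> by auto
  have "Pk (Suc (Suc m)) (act g q) = mul (Pk (Suc m) (act g q)) (act g q (Suc m))" by simp
  also have "\<dots> = mul (mul (Pk (Suc m) q) (ginv (g m))) (act g q (Suc m))" using IH by simp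
  finally have *: "Pk (Suc (Suc m)) (act g q) = mul (mul (Pk (Suc m) q) (ginv (g m))) (act g q (Suc m))" .
  have a: "act g q (Suc m) = (if Suc m = k - 1 then mul (g m) (q (Suc m)) else mul (mul (g m) (q (Suc m))) (ginv (g (Suc m))))"
    using Suc.prems by (rule act_Suc)
  show ?case
  proof (cases "Suc m = k - 1")
    case True
    then have kk: "k = Suc (Suc m)" using k2 by arith
    show ?thesis unfolding * a using gm True by (simp add: assoc kk)
  next
    case False
    then show ?thesis unfolding * a using gm by (simp add: assoc)
  qed
qed

lemma act_Pk: assumes "goodg g" shows "Pk k (act g q) = Pk k q"
proof -
  have "Pk (Suc (k-1)) (act g q) = Pk (Suc (k-1)) q" using act_Pk_aux[OF assms, of "k-1" q] k2 by simp
  moreover have "Suc (k - 1) = k" using k2 by simp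
  ultimately show ?thesis by simp
qed

lemma norm_Pk: "norm (Pk m q) = (\<Prod>i<m. norm (q i))"
  by (induction m) (auto simp: norm_mul)


primrec Gs :: "(nat \<Rightarrow> 'a) \<Rightarrow> nat \<Rightarrow> 'a" where
  "Gs q 0 = unit (q 0)"
| "Gs q (Suc i) = unit (mul (Gs q i) (q (Suc i)))"

lemma norm_Gs [simp]: "norm (Gs q i) = 1"
  by (cases i) auto

lemma goodg_Gs: "goodg (Gs q)"
  unfolding goodg_def by simp

definition vec :: "(nat \<Rightarrow> real) \<Rightarrow> 'a \<Rightarrow> nat \<Rightarrow> 'a" where
  "vec r x = (\<lambda>i. if i < k - 1 then r i *\<^sub>R e else if i = k - 1 then x else 0)"

lemma nf1: assumes "q \<in> Kset"
  shows "act (Gs q) q = vec (\<lambda>i. norm (q i)) (act (Gs q) q (k - 1))"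
proof
  fix i
  show "act (Gs q) q i = vec (\<lambda>i. norm (q i)) (act (Gs q) q (k - 1)) i"
  proof (cases "i < k - 1")
    case True
    show ?thesis
    proof (cases i)
      case 0
      then show ?thesis using True by (simp add: act_eq vec_def mul_ginv_unit)
    next
      case (Suc j)
      then have "act (Gs q) q i = mul (mul (Gs q j) (q (Suc j))) (ginv (Gs q (Suc j)))"
        using True act_Suc[of j "Gs q" q] by auto
      also have "\<dots> = norm (q i) *\<^sub>R e" using Suc by (simp add: mul_ginv_unit norm_mul)
      finally show ?thesis using True by (simp add: vec_def)
    qed
  next
    case False
    then show ?thesis using assms k2 unfolding vec_def Kset_def by (auto simp: act_eq)
  qed
qed

lemma Pk_vec: "m \<le> k - 1 \<Longrightarrow> Pk m (vec r x) = (\<Prod>i<m. r i) *\<^sub>R e"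
  by (induction m) (auto simp: vec_def mult.commute)

lemma Pk_vec_k: "Pk k (vec r x) = (\<Prod>i<k-1. r i) *\<^sub>R x"
proof -
  have kk: "k = Suc (k - 1)" using k2 by simp
  have "Pk (Suc (k-1)) (vec r x) = (\<Prod>i<k-1. r i) *\<^sub>R x"
    using Pk_vec[of "k-1" r x] by (simp add: vec_def)
  then show ?thesis using kk by metis
qed

lemma norm_ginv_unit [simp]: "norm (ginv (unit x)) = 1"
  by (simp add: norm_inv)

lemma nf2: assumes "j < k - 1" "r j = 0"
  shows "act (\<lambda>m. if j \<le> m then ginv (unit x) else e) (vec r x) = vec r (norm x *\<^sub>R e)"
proof
  fix i
  define h where "h = ginv (unit x)"
  define g where "g = (\<lambda>m. if j \<le> m then h else e)"
  have nh: "norm h = 1" unfolding h_def by simp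
  have "act g (vec r x) i = vec r (norm x *\<^sub>R e) i"
  proof (cases "i < k - 1")
    case True
    show ?thesis
    proof (cases i)
      case 0
      then have "act g (vec r x) i = mul (vec r x 0) (ginv (g 0))" using True by (simp add: act_eq)
      then show ?thesis using True assms 0 by (cases "j = 0") (simp_all add: vec_def g_def)
    next
      case (Suc i')
      then have a: "act g (vec r x) i = mul (mul (g i') (vec r x i)) (ginv (g i))"
        using True act_Suc[of i' g "vec r x"] by simp
      have vi: "vec r x i = r i *\<^sub>R e" "vec r (norm x *\<^sub>R e) i = r i *\<^sub>R e" using True by (simp_all add: vec_def)
      show ?thesis
      proof (cases "j \<le> i'")
        case True
        then have "g i' = h" "g i = h" using Suc by (simp_all add: g_def)
        then show ?thesis unfolding a vi using nh by simp
      next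
        case False
        show ?thesis
        proof (cases "j = i")
          case True
          then show ?thesis unfolding a vi using assms by simp
        next
          case False
          then have "g i' = e" "g i = e" using Suc \<open>\<not> j \<le> i'\<close> by (simp_all add: g_def)
          then show ?thesis unfolding a vi by simp
        qed
      qed
    qed
  next
    case False
    show ?thesis
    proof (cases "i = k - 1")
      case True
      define i' where "i' = k - 2"
      have i': "i = Suc i'" using True k2 unfolding i'_def by arith
      then have a: "act g (vec r x) i = mul (g i') (vec r x i)"
        using True act_Suc[of i' g "vec r x"] k2 by simp
      have "j \<le> i'" using i' True assms by simp
      then have "g i' = h" by (simp add: g_def)
      then show ?thesis unfolding a using True by (simp add: vec_def h_def mul_ginv_unit')
    next
      case False
      then show ?thesis using \<open>\<not> i < k - 1\<close> by (simp add: act_eq vec_def)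
    qed
  qed
  then show "act (\<lambda>m. if j \<le> m then ginv (unit x) else e) (vec r x) i = vec r (norm x *\<^sub>R e) i"
    unfolding g_def h_def .
qed

definition cc :: "(nat \<Rightarrow> 'a) \<Rightarrow> real" where "cc q = (\<Prod>i<k-1. norm (q i))"

definition sig :: "(nat \<Rightarrow> 'a) \<Rightarrow> nat \<Rightarrow> 'a" where
  "sig q = vec (\<lambda>i. norm (q i)) (if cc q \<noteq> 0 then (1 / cc q) *\<^sub>R Pk k q else norm (q (k-1)) *\<^sub>R e)"

lemma to_sig: assumes "q \<in> Kset" shows "\<exists>g. goodg g \<and> act g q = sig q"
proof -
  define x where "x = act (Gs q) q (k - 1)"
  have v: "act (Gs q) q = vec (\<lambda>i. norm (q i)) x" using nf1[OF assms] x_def by simp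
  have nx: "norm x = norm (q (k-1))" using act_norm[OF goodg_Gs] k2 x_def by simp
  have P0: "Pk k (act (Gs q) q) = Pk k q" by (rule act_Pk[OF goodg_Gs])
  have P: "cc q *\<^sub>R x = Pk k q"
    using P0 unfolding v Pk_vec_k cc_def by simp
  show ?thesis
  proof (cases "cc q = 0")
    case False
    have "(1 / cc q) *\<^sub>R Pk k q = (1 / cc q) *\<^sub>R (cc q *\<^sub>R x)" using P by simp
    then have "x = (1 / cc q) *\<^sub>R Pk k q" using False by simp
    then show ?thesis using False v goodg_Gs unfolding sig_def by auto
  next
    case True
    then obtain j where j: "j < k - 1" "norm (q j) = 0" unfolding cc_def by (auto simp: prod_zero_iff)
    define g2 where "g2 = (\<lambda>m. if j \<le> m then ginv (unit x) else e)"
    have g2: "goodg g2" unfolding g2_def goodg_def by auto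
    have "act g2 (act (Gs q) q) = sig q"
      unfolding v g2_def using nf2[of j "\<lambda>i. norm (q i)" x] j True nx by (simp add: sig_def)
    then have "act (\<lambda>i. mul (g2 i) (Gs q i)) q = sig q" using act_comp[OF goodg_Gs g2] by simp
    then show ?thesis using goodg_comp[OF goodg_Gs g2] by blast
  qed
qed

lemma sig_eq: assumes "\<forall>i<k. norm (q i) = norm (q' i)" "Pk k q = Pk k q'"
  shows "sig q = sig q'"
proof -
  have "cc q = cc q'" unfolding cc_def using assms(1) by (auto intro!: prod.cong)
  moreover have "vec (\<lambda>i. norm (q i)) = vec (\<lambda>i. norm (q' i))"
    using assms(1) by (auto simp: vec_def fun_eq_iff)
  ultimately show ?thesis unfolding sig_def using assms k2 by auto
qed

lemma rel_of: assumes "q \<in> Kset" "q' \<in> Kset" "\<forall>i<k. norm (q i) = norm (q' i)" "Pk k q = Pk k q'"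
  shows "\<exists>g. goodg g \<and> q' = act g q"
proof -
  obtain g1 where g1: "goodg g1" "act g1 q = sig q" using to_sig[OF assms(1)] by blast
  obtain g2 where g2: "goodg g2" "act g2 q' = sig q'" using to_sig[OF assms(2)] by blast
  have "q' = act (\<lambda>i. ginv (g2 i)) (act g2 q')" using act_inv[OF g2(1)] by simp
  also have "\<dots> = act (\<lambda>i. ginv (g2 i)) (act g1 q)" using g1 g2 sig_eq[OF assms(3,4)] by simp
  also have "\<dots> = act (\<lambda>i. mul (ginv (g2 i)) (g1 i)) q" using act_comp[OF g1(1) goodg_inv[OF g2(1)]] by simp
  finally show ?thesis using goodg_comp[OF g1(1) goodg_inv[OF g2(1)]] by blast
qed

end



lemma prod_split_last: "1 \<le> (k::nat) \<Longrightarrow> (\<Prod>i<k. r i) = r (k-1) * (\<Prod>i<k-1. (r i :: real))"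
proof -
  assume "1 \<le> k"
  then have "{..<k} = {..<Suc (k-1)}" by simp
  then have "{..<k} = insert (k-1) {..<k-1}" using lessThan_Suc[of "k-1"] by simp
  then show ?thesis by simp
qed

lemma prod_lt_aux:
  fixes r r' :: "nat \<Rightarrow> real"
  assumes "1 \<le> k" "\<forall>i<k. 0 \<le> r i" "\<forall>j<k-1. r j - r (k-1) = r' j - r' (k-1)"
    "r (k-1) < r' (k-1)"
  shows "(\<Prod>i<k. r i) < (\<Prod>i<k. r' i)"
proof (rule prod_mono_strict[of "k-1"])
  show "k - 1 \<in> {..<k}" using assms by auto
  show "r (k - 1) < r' (k - 1)" by fact
  show "finite {..<k}" by simp
  fix i assume i: "i \<in> {..<k}"
  have "r i \<le> r' i"
  proof (cases "i = k-1")
    case False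
    then have "i < k - 1" using i by auto
    then show ?thesis using assms(3,4) by force
  qed (use assms in auto)
  moreover have "r i < r' i"
  proof (cases "i = k-1")
    case False
    then have "i < k - 1" using i by auto
    then show ?thesis using assms(3,4) by force
  qed (use assms in auto)
  ultimately show "0 \<le> r i \<and> r i \<le> r' i" "0 < r' i" using assms(2) i by force+
qed

lemma prod_inj:
  fixes r r' :: "nat \<Rightarrow> real"
  assumes "1 \<le> k" "\<forall>i<k. 0 \<le> r i" "\<forall>i<k. 0 \<le> r' i"
    "\<forall>j<k-1. r j - r (k-1) = r' j - r' (k-1)" "(\<Prod>i<k. r i) = (\<Prod>i<k. r' i)"
  shows "\<forall>i<k. r i = r' i"
proof -
  have "\<not> r (k-1) < r' (k-1)" using prod_lt_aux[of k r r'] assms by auto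
  moreover have "\<not> r' (k-1) < r (k-1)" using prod_lt_aux[of k r' r] assms by auto
  ultimately have eq: "r (k-1) = r' (k-1)" by auto
  show ?thesis
  proof (intro allI impI)
    fix i assume "i < k"
    then show "r i = r' i" using eq assms(4) by (cases "i = k - 1") force+
  qed
qed

lemma prod_exists:
  fixes s :: "nat \<Rightarrow> real" and t :: real
  assumes "0 \<le> t"
  shows "\<exists>a. (\<forall>j<m. 0 \<le> a + s j) \<and> 0 \<le> a \<and> a * (\<Prod>j<m. a + s j) = t"
proof -
  define A where "A = insert 0 ((\<lambda>j. - s j) ` {..<m})"
  define a0 where "a0 = Max A"
  have fA: "finite A" "A \<noteq> {}" unfolding A_def by auto
  have a0ge: "0 \<le> a0" "\<And>j. j < m \<Longrightarrow> - s j \<le> a0" unfolding a0_def using fA by (auto simp: A_def)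
  have "a0 \<in> A" unfolding a0_def using fA by simp
  define f where "f = (\<lambda>a::real. a * (\<Prod>j<m. a + s j))"
  have f0: "f a0 = 0"
  proof (cases "a0 = 0")
    case False
    then obtain j where "j < m" "a0 = - s j" using \<open>a0 \<in> A\<close> unfolding A_def by auto
    then show ?thesis unfolding f_def by (auto intro!: prod_zero)
  qed (simp add: f_def)
  define b where "b = a0 + t + 1"
  have "1 \<le> (\<Prod>j<m. b + s j)"
    by (rule prod_ge_1) (use a0ge assms in \<open>auto simp: b_def\<close>, smt)
  then have "b * 1 \<le> b * (\<Prod>j<m. b + s j)"
    by (rule mult_left_mono) (use a0ge assms b_def in linarith)
  then have "b \<le> f b" unfolding f_def by simp
  then have fb: "t \<le> f b" using a0ge b_def by linarith
  have "continuous_on {a0..b} f" unfolding f_def by (intro continuous_intros)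
  then obtain x where x: "a0 \<le> x" "x \<le> b" "f x = t"
    using IVT'[of f a0 t b] f0 fb assms b_def a0ge by auto
  show ?thesis
    by (rule exI[of _ x]) (use x a0ge f_def in force)
qed

lemma prod_bound:
  fixes r :: "nat \<Rightarrow> real"
  assumes "1 \<le> k" "\<forall>i<k. 0 \<le> r i" "(\<Prod>i<k. r i) \<le> M" "\<forall>j<k-1. \<bar>r j - r (k-1)\<bar> \<le> M" "0 \<le> M"
  shows "\<forall>i<k. r i \<le> 3 * M + 1"
proof -
  have a: "r (k-1) \<le> 2 * M + 1"
  proof (rule ccontr)
    assume "\<not> ?thesis"
    then have big: "r (k-1) > 2 * M + 1" by simp
    have "1 \<le> (\<Prod>i<k-1. r i)"
    proof (rule prod_ge_1)
      fix i assume "i \<in> {..<k-1}"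
      then have "\<bar>r i - r (k-1)\<bar> \<le> M" using assms(4) by auto
      then show "1 \<le> r i" using big assms(5) by linarith
    qed
    then have "r (k-1) * 1 \<le> r (k-1) * (\<Prod>i<k-1. r i)"
      by (rule mult_left_mono) (use big assms(5) in linarith)
    then have "r (k-1) \<le> (\<Prod>i<k. r i)" using prod_split_last[OF assms(1), of r] by simp
    then show False using big assms(3,5) by linarith
  qed
  show ?thesis
  proof (intro allI impI)
    fix i assume "i < k"
    show "r i \<le> 3 * M + 1"
    proof (cases "i = k - 1")
      case False
      then have "\<bar>r i - r (k-1)\<bar> \<le> M" using assms(4) \<open>i < k\<close> by auto
      then show ?thesis using a by linarith
    qed (use a assms in auto)
  qed
qed




context chainK begin

definition n :: nat where "n = k - 1 + d"

definition Fc :: "(nat \<Rightarrow> 'a) \<Rightarrow> nat \<Rightarrow> real" where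
  "Fc q i = (if i < k - 1 then norm (q i) - norm (q (k-1)) else enc (Pk k q) (i - (k-1)))"

definition F :: "(nat \<Rightarrow> 'a) \<Rightarrow> nat \<Rightarrow> real" where
  "F q = (\<lambda>i. if i < n then Fc q i else 0)"

lemma Kspace_eq: "Kspace k = top_of_set Kset"
  unfolding Kspace_def Kset_def euclidean_product_topology ..

lemma topspace_K: "topspace (Kspace k) = Kset"
  unfolding Kspace_eq by simp

lemma cont_Pk: "continuous_on UNIV (\<lambda>q. Pk m q)"
proof (induction m)
  case 0 then show ?case by simp
next
  case (Suc m)
  show ?case unfolding Pk.simps
    by (rule bounded_bilinear.continuous_on[OF bil Suc]) simp
qed

lemma cont_Fc: "continuous_on UNIV (\<lambda>q. Fc q i)"
proof (cases "i < k - 1")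
  case True
  then show ?thesis unfolding Fc_def by (simp add: continuous_intros)
next
  case False
  have "continuous_on UNIV (\<lambda>q. enc (Pk k q) (i - (k-1)))"
    by (rule continuous_on_compose2[OF enc_cont cont_Pk]) auto
  then show ?thesis using False unfolding Fc_def by simp
qed

lemma cont_F: "continuous_map (Kspace k) (Euclidean_space n) F"
  unfolding F_def continuous_map_componentwise_Euclidean_space Kspace_eq
  using continuous_on_subset[OF cont_Fc, of Kset] by auto

lemma F_act: assumes "goodg g" shows "F (act g q) = F q"
proof -
  have "Fc (act g q) i = Fc q i" for i
    unfolding Fc_def using act_norm[OF assms] act_Pk[OF assms] k2 by simp
  then show ?thesis unfolding F_def by (intro ext) presburger
qed

lemma F_fiber: assumes "q \<in> Kset" "q' \<in> Kset" "F q = F q'"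
  shows "\<exists>g. goodg g \<and> q' = act g q"
proof -
  have Fc: "Fc q i = Fc q' i" if "i < n" for i
  proof -
    have "F q i = F q' i" using assms(3) by simp
    then show ?thesis using that by (simp add: F_def)
  qed
  have "enc (Pk k q) j = enc (Pk k q') j" for j
  proof (cases "j < d")
    case True
    then have "k - 1 + j < n" unfolding n_def by simp
    then show ?thesis using Fc[of "k - 1 + j"] unfolding Fc_def by simp
  next
    case False
    then show ?thesis using enc_supp by simp
  qed
  then have "enc (Pk k q) = enc (Pk k q')" by (rule ext)
  then have "dec (enc (Pk k q)) = dec (enc (Pk k q'))" by simp
  then have P: "Pk k q = Pk k q'" by (simp add: dec_enc)
  have dif: "\<forall>j<k-1. norm (q j) - norm (q (k-1)) = norm (q' j) - norm (q' (k-1))"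
  proof (intro allI impI)
    fix j assume j: "j < k - 1"
    then have "j < n" unfolding n_def by simp
    then show "norm (q j) - norm (q (k-1)) = norm (q' j) - norm (q' (k-1))"
      using Fc[of j] j unfolding Fc_def by simp
  qed
  have pr: "(\<Prod>i<k. norm (q i)) = (\<Prod>i<k. norm (q' i))" using P norm_Pk[of k q] norm_Pk[of k q'] by simp
  have "\<forall>i<k. norm (q i) = norm (q' i)"
  proof (rule prod_inj[of k "\<lambda>i. norm (q i)" "\<lambda>i. norm (q' i)"])
    show "1 \<le> k" using k2 by simp
  qed (use dif pr in auto)
  then show ?thesis using rel_of[OF assms(1,2) _ P] by blast
qed

lemma F_Kset: "F q \<in> topspace (Euclidean_space n)"
  unfolding topspace_Euclidean_space F_def by auto

lemma F_surj: "F ` Kset = topspace (Euclidean_space n)"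
proof
  show "F ` Kset \<subseteq> topspace (Euclidean_space n)" using F_Kset by auto
  show "topspace (Euclidean_space n) \<subseteq> F ` Kset"
  proof
    fix y assume y: "y \<in> topspace (Euclidean_space n)"
    then have y0: "\<And>i. n \<le> i \<Longrightarrow> y i = 0" unfolding topspace_Euclidean_space by auto
    define p where "p = dec (\<lambda>j. if j < d then y (k - 1 + j) else 0)"
    have encp: "enc p = (\<lambda>j. if j < d then y (k - 1 + j) else 0)" unfolding p_def by (rule enc_dec) auto
    obtain a where a: "\<forall>j<k-1. 0 \<le> a + y j" "0 \<le> a" "a * (\<Prod>j<k-1. a + y j) = norm p"
      using prod_exists[of "norm p" "k-1" y] by auto
    define r where "r = (\<lambda>i. a + y i)"
    define c where "c = (\<Prod>j<k-1. r j)"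
    define z where "z = (if c \<noteq> 0 then (1 / c) *\<^sub>R p else a *\<^sub>R e)"
    define q where "q = vec r z"
    have qK: "q \<in> Kset" unfolding q_def vec_def Kset_def using k2 by auto
    have nq: "norm (q i) = r i" if "i < k - 1" for i
    proof -
      have "q i = r i *\<^sub>R e" using that by (simp add: q_def vec_def)
      then show ?thesis using that a unfolding r_def by simp
    qed
    have acp: "a * c = norm p" using a unfolding c_def r_def by simp
    have nz: "norm z = a"
    proof (cases "c = 0")
      case True then show ?thesis using a unfolding z_def by simp
    next
      case False
      have "c \<ge> 0" unfolding c_def r_def using a by (auto intro!: prod_nonneg)
      then show ?thesis using False acp unfolding z_def by (auto simp: field_simps)
    qed
    have nqk: "norm (q (k-1)) = a" unfolding q_def vec_def using nz k2 by simp
    have Pq: "Pk k q = p"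
    proof (cases "c = 0")
      case True
      then have "norm p = 0" using acp by simp
      then show ?thesis using True unfolding q_def Pk_vec_k c_def[symmetric] by simp
    next
      case False
      then show ?thesis unfolding q_def Pk_vec_k c_def[symmetric] z_def by simp
    qed
    have "F q = y"
    proof
      fix i
      show "F q i = y i"
      proof (cases "i < n")
        case False then show ?thesis using y0 unfolding F_def by simp
      next
        case True
        show ?thesis
        proof (cases "i < k - 1")
          case True
          then show ?thesis using \<open>i < n\<close> nq nqk unfolding F_def Fc_def r_def by simp
        next
          case False
          then have "i - (k-1) < d" using \<open>i < n\<close> unfolding n_def by simp
          then show ?thesis using \<open>i < n\<close> False unfolding F_def Fc_def Pq encp by simp
        qed
      qed
    qed
    then show "y \<in> F ` Kset" using qK by blast
  qed
qed

end



context chainK begin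

lemma compact_bound: assumes "compactin (Euclidean_space n) K"
  shows "\<exists>M\<ge>0. \<forall>y\<in>K. \<forall>i. \<bar>y i\<bar> \<le> M"
proof -
  have KP: "compactin (powertop_real UNIV) K" using assms unfolding Euclidean_space_def
    by (simp add: compactin_subtopology)
  have ex: "\<exists>a. \<forall>y\<in>K. \<bar>y i\<bar> \<le> a" for i
  proof -
    have "compactin euclideanreal ((\<lambda>y. y i) ` K)"
      by (rule image_compactin[OF KP]) (rule continuous_map_product_projection, simp)
    then have "bounded ((\<lambda>y. y i) ` K)" by (simp add: compact_imp_bounded)
    then show ?thesis unfolding bounded_iff by auto
  qed
  have "\<forall>i. \<exists>a. \<forall>y\<in>K. \<bar>y i\<bar> \<le> a" using ex by blast
  from choice[OF this] obtain Mf where Mf0: "\<forall>i. \<forall>y\<in>K. \<bar>y i\<bar> \<le> Mf i" by blast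
  then have Mf: "\<And>i y. y \<in> K \<Longrightarrow> \<bar>y i\<bar> \<le> Mf i" by blast
  define M where "M = (\<Sum>i<n. \<bar>Mf i\<bar>)"
  have sub: "K \<subseteq> topspace (Euclidean_space n)" using assms by (rule compactin_subset_topspace)
  have "\<forall>y\<in>K. \<forall>i. \<bar>y i\<bar> \<le> M"
  proof (intro ballI allI)
    fix y i assume y: "y \<in> K"
    show "\<bar>y i\<bar> \<le> M"
    proof (cases "i < n")
      case True
      have "\<bar>Mf i\<bar> \<le> M" unfolding M_def by (rule member_le_sum) (use True in auto)
      then show ?thesis using Mf[OF y, of i] by linarith
    next
      case False
      then have "y i = 0" using sub y unfolding topspace_Euclidean_space by auto
      then show ?thesis unfolding M_def by (simp add: sum_nonneg)
    qed
  qed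
  moreover have "M \<ge> 0" unfolding M_def by (simp add: sum_nonneg)
  ultimately show ?thesis by blast
qed

lemma F_bound: assumes "q \<in> Kset" "\<forall>i. \<bar>F q i\<bar> \<le> M" "0 \<le> M"
  shows "\<forall>i<k. norm (q i) \<le> 3 * (real (d+1) * M) + 1"
proof -
  define M1 where "M1 = real (d+1) * M"
  have MM1: "M \<le> M1" unfolding M1_def using mult_right_mono[of 1 "1 + real d" M] assms(3) by simp
  have encF: "enc (Pk k q) i = F q (k - 1 + i)" if "i < d" for i
    using that unfolding F_def Fc_def n_def by simp
  have "norm (Pk k q) = norm (dec (enc (Pk k q)))" by (simp add: dec_enc)
  also have "\<dots> \<le> (\<Sum>i<d. \<bar>enc (Pk k q) i\<bar>)" by (rule dec_bound)
  also have "\<dots> \<le> (\<Sum>i<d. M)" by (rule sum_mono) (use encF assms(2) in auto)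
  also have "\<dots> \<le> M1" unfolding M1_def using mult_right_mono[of "real d" "1 + real d" M] assms(3) by simp
  finally have P: "(\<Prod>i<k. norm (q i)) \<le> M1" using norm_Pk by simp
  have D: "\<forall>j<k-1. \<bar>norm (q j) - norm (q (k-1))\<bar> \<le> M1"
  proof (intro allI impI)
    fix j assume "j < k - 1"
    then have "F q j = norm (q j) - norm (q (k-1))" unfolding F_def Fc_def n_def by simp
    then show "\<bar>norm (q j) - norm (q (k-1))\<bar> \<le> M1" using assms(2)[rule_format, of j] MM1 by simp
  qed
  have "\<forall>i<k. norm (q i) \<le> 3 * M1 + 1"
    by (rule prod_bound[of k "\<lambda>i. norm (q i)" M1]) (use k2 P D MM1 assms(3) in auto)
  then show ?thesis unfolding M1_def .
qed

lemma F_quot: "quotient_map (Kspace k) (Euclidean_space n) F"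
proof (rule quotient_map_into_k_space)
  show "k_space (Euclidean_space n)" by (rule metrizable_imp_k_space[OF metrizable_Euclidean_space])
  show "continuous_map (Kspace k) (Euclidean_space n) F" by (rule cont_F)
  show "F ` topspace (Kspace k) = topspace (Euclidean_space n)" using F_surj topspace_K by simp
  fix K assume K: "compactin (Euclidean_space n) K"
  define C where "C = {x \<in> topspace (Kspace k). F x \<in> K}"
  obtain M where M: "M \<ge> 0" "\<forall>y\<in>K. \<forall>i. \<bar>y i\<bar> \<le> M" using compact_bound[OF K] by blast
  define R where "R = 3 * (real (d+1) * M) + 1"
  define B where "B = PiE UNIV (\<lambda>i. if i < k then cball (0::'a) R else {0})"
  have CB: "C \<subseteq> B"
  proof
    fix q assume "q \<in> C"
    then have q: "q \<in> Kset" "F q \<in> K" unfolding C_def topspace_K by auto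
    then have "\<forall>i<k. norm (q i) \<le> R" using F_bound[OF q(1) _ M(1)] M(2) unfolding R_def by blast
    then show "q \<in> B" using q(1) unfolding B_def Kset_def by (auto simp: PiE_iff)
  qed
  have "compactin (product_topology (\<lambda>i. euclidean) UNIV) B"
    unfolding B_def compactin_PiE by auto
  moreover have "B \<subseteq> Kset"
  proof
    fix x assume "x \<in> B"
    then have *: "\<And>i. x i \<in> (if i < k then cball 0 R else {0})" unfolding B_def by (auto simp: PiE_iff)
    show "x \<in> Kset" unfolding Kset_def
    proof (intro CollectI allI impI)
      fix i assume "k \<le> i"
      then show "x i = 0" using *[of i] by simp
    qed
  qed
  ultimately have cB: "compactin (Kspace k) B" unfolding Kspace_def Kset_def by (simp add: compactin_subtopology)
  have "closedin (Euclidean_space n) K" by (rule compactin_imp_closedin[OF Hausdorff_Euclidean_space K])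
  then have "closedin (Kspace k) C" unfolding C_def by (rule closedin_continuous_map_preimage[OF cont_F])
  then have cC: "compactin (Kspace k) C" using closed_compactin[OF cB CB] by simp
  have Ksub: "K \<subseteq> topspace (Euclidean_space n)" using K by (rule compactin_subset_topspace)
  have Csub: "C \<subseteq> topspace (Kspace k)" unfolding C_def by auto
  show "quotient_map (subtopology (Kspace k) C) (subtopology (Euclidean_space n) K) F"
    unfolding C_def[symmetric]
  proof (rule continuous_imp_quotient_map)
    show "continuous_map (subtopology (Kspace k) C) (subtopology (Euclidean_space n) K) F"
      unfolding continuous_map_in_subtopology
      using continuous_map_from_subtopology[OF cont_F] C_def by auto
    show "compact_space (subtopology (Kspace k) C)" by (rule compact_space_subtopology[OF cC])
    show "Hausdorff_space (subtopology (Euclidean_space n) K)"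
      by (rule Hausdorff_space_subtopology[OF Hausdorff_Euclidean_space])
    show "F ` topspace (subtopology (Kspace k) C) = topspace (subtopology (Euclidean_space n) K)"
    proof
      show "F ` topspace (subtopology (Kspace k) C) \<subseteq> topspace (subtopology (Euclidean_space n) K)"
        using Ksub C_def by auto
      show "topspace (subtopology (Euclidean_space n) K) \<subseteq> F ` topspace (subtopology (Kspace k) C)"
      proof
        fix y assume "y \<in> topspace (subtopology (Euclidean_space n) K)"
        then have y: "y \<in> K" "y \<in> topspace (Euclidean_space n)" by auto
        then obtain q where q: "q \<in> Kset" "y = F q" using F_surj by blast
        then have "q \<in> topspace (subtopology (Kspace k) C)" using y topspace_K unfolding C_def by auto
        then show "y \<in> F ` topspace (subtopology (Kspace k) C)" using q by blast
      qed
    qed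
  qed
qed

theorem orbit_homeo: "orbit_space mul ginv {g. norm g = 1} k homeomorphic_space Euclidean_space n"
  unfolding orbit_space_def
proof (rule quot_homeo[OF F_quot])
  show "orbit_rel mul ginv {g. norm g = 1} k =
    {(x, y). x \<in> topspace (Kspace k) \<and> y \<in> topspace (Kspace k) \<and> F x = F y}"
  proof (intro set_eqI iffI)
    fix z assume "z \<in> orbit_rel mul ginv {g. norm g = 1} k"
    then obtain p q g where z: "z = (p, q)" "p \<in> Kset" "goodg g" "q = act g p"
      unfolding orbit_rel_def topspace_K goodg_def act_def by auto
    then show "z \<in> {(x, y). x \<in> topspace (Kspace k) \<and> y \<in> topspace (Kspace k) \<and> F x = F y}"
      using act_Kset F_act topspace_K by auto
  next
    fix z assume "z \<in> {(x, y). x \<in> topspace (Kspace k) \<and> y \<in> topspace (Kspace k) \<and> F x = F y}"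
    then obtain p q where z: "z = (p, q)" "p \<in> Kset" "q \<in> Kset" "F p = F q"
      using topspace_K by auto
    then obtain g where "goodg g" "q = act g p" using F_fiber by blast
    then show "z \<in> orbit_rel mul ginv {g. norm g = 1} k"
      unfolding orbit_rel_def topspace_K z(1) using z(2) unfolding goodg_def act_def by auto
  qed
qed

corollary orbit_homeo': "orbit_space mul ginv {g. norm g = 1} k homeomorphic_space Euclidean_space (d + k - 1)"
proof -
  have "d + k - 1 = n" unfolding n_def using k2 by simp
  then show ?thesis using orbit_homeo by simp
qed

end



lemma nf_inv1: "norm (g::'a::real_normed_field) = 1 \<Longrightarrow> g * inverse g = 1"
  by (metis norm_zero right_inverse zero_neq_one)
lemma nf_inv2: "norm (g::'a::real_normed_field) = 1 \<Longrightarrow> inverse g * g = 1"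
  by (metis norm_zero left_inverse zero_neq_one)
lemma nf_inv3: "norm (g::'a::{real_normed_field}) = 1 \<Longrightarrow> norm (inverse g) = 1"
  by (simp add: norm_inverse)

definition enc_r :: "real \<Rightarrow> nat \<Rightarrow> real" where "enc_r x = (\<lambda>i. if i = 0 then x else 0)"
definition dec_r :: "(nat \<Rightarrow> real) \<Rightarrow> real" where "dec_r y = y 0"

lemma chainK_real: assumes "2 \<le> k" shows "chainK ((*) :: real \<Rightarrow> real \<Rightarrow> real) inverse 1 1 enc_r dec_r k"
proof (rule chainK.intro)
  show "bounded_bilinear ((*) :: real \<Rightarrow> real \<Rightarrow> real)" by (rule bounded_bilinear_mult)
  fix i :: nat
  show "continuous_on UNIV (\<lambda>x. enc_r x i)" unfolding enc_r_def by (cases "i = 0") auto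
  fix y :: "nat \<Rightarrow> real"
  show "(\<forall>i\<ge>1. y i = 0) \<Longrightarrow> enc_r (dec_r y) = y" unfolding enc_r_def dec_r_def
    by (auto simp: fun_eq_iff)
  show "norm (dec_r y) \<le> (\<Sum>i<1. \<bar>y i\<bar>)" unfolding dec_r_def by simp
qed (use assms in \<open>auto simp: enc_r_def dec_r_def abs_mult nf_inv1 nf_inv2 nf_inv3\<close>)

definition enc_c :: "complex \<Rightarrow> nat \<Rightarrow> real" where
  "enc_c x = (\<lambda>i. if i = 0 then Re x else if i = 1 then Im x else 0)"
definition dec_c :: "(nat \<Rightarrow> real) \<Rightarrow> complex" where "dec_c y = Complex (y 0) (y 1)"

lemma chainK_complex: assumes "2 \<le> k" shows "chainK ((*) :: complex \<Rightarrow> complex \<Rightarrow> complex) inverse 1 2 enc_c dec_c k"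
proof (rule chainK.intro)
  show "bounded_bilinear ((*) :: complex \<Rightarrow> complex \<Rightarrow> complex)" by (rule bounded_bilinear_mult)
  fix i :: nat
  show "continuous_on UNIV (\<lambda>x. enc_c x i)" unfolding enc_c_def by (cases "i = 0"; cases "i = 1") (auto intro!: continuous_intros)
  fix y :: "nat \<Rightarrow> real"
  show "(\<forall>i\<ge>2. y i = 0) \<Longrightarrow> enc_c (dec_c y) = y" unfolding enc_c_def dec_c_def
  proof (intro ext)
    fix j assume "\<forall>i\<ge>2. y i = 0"
    then show "(if j = 0 then Re (Complex (y 0) (y 1)) else if j = 1 then Im (Complex (y 0) (y 1)) else 0) = y j"
      by (cases "j = 0"; cases "j = 1") auto
  qed
  have "norm (dec_c y) \<le> \<bar>y 0\<bar> + \<bar>y 1\<bar>" unfolding dec_c_def using cmod_le[of "Complex (y 0) (y 1)"] by simp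
  then show "norm (dec_c y) \<le> (\<Sum>i<2. \<bar>y i\<bar>)" by (simp add: numeral_2_eq_2)
qed (use assms in \<open>auto simp: enc_c_def dec_c_def norm_mult nf_inv1 nf_inv2 nf_inv3\<close>)




lemma qmult_eq: "qmult (a1, b1, c1, d1) (a2, b2, c2, d2) =
     (a1*a2 - b1*b2 - c1*c2 - d1*d2,
      a1*b2 + b1*a2 + c1*d2 - d1*c2,
      a1*c2 - b1*d2 + c1*a2 + d1*b2,
      a1*d2 + b1*c2 - c1*b2 + d1*a2)"
  by (simp add: qmult_def)

lemma qnorm: "norm ((a, b, c, d) :: quat) = sqrt (a^2 + b^2 + c^2 + d^2)"
  by (simp add: norm_Pair add.assoc)

lemma qnorm_mul: "norm (qmult p q) = norm p * norm q"
proof -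
  obtain a1 b1 c1 d1 where p: "p = (a1, b1, c1, d1)" by (cases p rule: prod_cases4)
  obtain a2 b2 c2 d2 where q: "q = (a2, b2, c2, d2)" by (cases q rule: prod_cases4)
  have "(a1*a2 - b1*b2 - c1*c2 - d1*d2)^2 + (a1*b2 + b1*a2 + c1*d2 - d1*c2)^2 +
        (a1*c2 - b1*d2 + c1*a2 + d1*b2)^2 + (a1*d2 + b1*c2 - c1*b2 + d1*a2)^2
      = (a1^2 + b1^2 + c1^2 + d1^2) * (a2^2 + b2^2 + c2^2 + d2^2)"
    by algebra
  then show ?thesis unfolding p q qmult_eq qnorm by (simp add: real_sqrt_mult)
qed

lemma qbil: "bounded_bilinear qmult"
proof
  fix a a' b b' :: quat and r :: real
  show "qmult (a + a') b = qmult a b + qmult a' b"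
    by (cases a rule: prod_cases4; cases a' rule: prod_cases4; cases b rule: prod_cases4)
       (simp add: qmult_eq algebra_simps)
  show "qmult a (b + b') = qmult a b + qmult a b'"
    by (cases a rule: prod_cases4; cases b' rule: prod_cases4; cases b rule: prod_cases4)
       (simp add: qmult_eq algebra_simps)
  show "qmult (r *\<^sub>R a) b = r *\<^sub>R qmult a b"
    by (cases a rule: prod_cases4; cases b rule: prod_cases4)
       (simp add: qmult_eq algebra_simps)
  show "qmult a (r *\<^sub>R b) = r *\<^sub>R qmult a b"
    by (cases a rule: prod_cases4; cases b rule: prod_cases4)
       (simp add: qmult_eq algebra_simps)
next
  show "\<exists>K. \<forall>a b. norm (qmult a b) \<le> norm a * norm b * K"
    by (rule exI[of _ 1]) (simp add: qnorm_mul)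
qed

lemma qassoc: "qmult (qmult a b) c = qmult a (qmult b c)"
  by (cases a rule: prod_cases4; cases b rule: prod_cases4; cases c rule: prod_cases4)
     (simp add: qmult_eq algebra_simps)

lemma qunit1: "qmult (1, 0, 0, 0) x = x"
  by (cases x rule: prod_cases4) (simp add: qmult_eq)
lemma qunit2: "qmult x (1, 0, 0, 0) = x"
  by (cases x rule: prod_cases4) (simp add: qmult_eq)

lemma qnorm1: assumes "norm (q::quat) = 1"
  obtains a b c d where "q = (a, b, c, d)" "a^2 + b^2 + c^2 + d^2 = 1"
proof -
  obtain a b c d where q: "q = (a, b, c, d)" by (cases q rule: prod_cases4)
  then have "sqrt (a^2 + b^2 + c^2 + d^2) = 1" using assms qnorm by simp
  then have "a^2 + b^2 + c^2 + d^2 = 1" by simp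
  then show ?thesis using q that by blast
qed

lemma qinv_unit: assumes "norm g = 1" shows "qinv g = (fst g, - fst (snd g), - fst (snd (snd g)), - snd (snd (snd g)))"
proof -
  obtain a b c d where g: "g = (a, b, c, d)" "a^2 + b^2 + c^2 + d^2 = 1" using qnorm1[OF assms] by blast
  show ?thesis unfolding g(1) qinv_def using g(2) by simp
qed

lemma qinv_r: assumes "norm g = 1" shows "qmult g (qinv g) = (1, 0, 0, 0)"
proof -
  obtain a b c d where g: "g = (a, b, c, d)" "a^2 + b^2 + c^2 + d^2 = 1" using qnorm1[OF assms] by blast
  show ?thesis unfolding qinv_unit[OF assms] unfolding g(1) using g(2)
    by (simp add: qmult_eq algebra_simps power2_eq_square)
qed

lemma qinv_l: assumes "norm g = 1" shows "qmult (qinv g) g = (1, 0, 0, 0)"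
proof -
  obtain a b c d where g: "g = (a, b, c, d)" "a^2 + b^2 + c^2 + d^2 = 1" using qnorm1[OF assms] by blast
  show ?thesis unfolding qinv_unit[OF assms] unfolding g(1) using g(2)
    by (simp add: qmult_eq algebra_simps power2_eq_square)
qed

lemma qinv_norm: assumes "norm g = 1" shows "norm (qinv g) = 1"
proof -
  obtain a b c d where g: "g = (a, b, c, d)" "a^2 + b^2 + c^2 + d^2 = 1" using qnorm1[OF assms] by blast
  show ?thesis unfolding qinv_unit[OF assms] unfolding g(1) qnorm using g(2) by simp
qed

definition enc_q :: "quat \<Rightarrow> nat \<Rightarrow> real" where
  "enc_q x = (\<lambda>i. if i = 0 then fst x else if i = 1 then fst (snd x) else if i = 2 then fst (snd (snd x))
      else if i = 3 then snd (snd (snd x)) else 0)"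
definition dec_q :: "(nat \<Rightarrow> real) \<Rightarrow> quat" where "dec_q y = (y 0, y 1, y 2, y 3)"

lemma chainK_quat: assumes "2 \<le> k" shows "chainK qmult qinv (1, 0, 0, 0) 4 enc_q dec_q k"
proof (rule chainK.intro)
  show "bounded_bilinear qmult" by (rule qbil)
  fix i :: nat
  show "continuous_on UNIV (\<lambda>x. enc_q x i)" unfolding enc_q_def
    by (cases "i = 0"; cases "i = 1"; cases "i = 2"; cases "i = 3") (auto intro!: continuous_intros)
  fix y :: "nat \<Rightarrow> real"
  show "(\<forall>i\<ge>4. y i = 0) \<Longrightarrow> enc_q (dec_q y) = y" unfolding enc_q_def dec_q_def
  proof (intro ext)
    fix j assume *: "\<forall>i\<ge>4. y i = 0"
    show "(if j = 0 then fst (y 0, y 1, y 2, y 3) else if j = 1 then fst (snd (y 0, y 1, y 2, y 3))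
        else if j = 2 then fst (snd (snd (y 0, y 1, y 2, y 3)))
        else if j = 3 then snd (snd (snd (y 0, y 1, y 2, y 3))) else 0) = y j"
    proof (cases "j < 4")
      case True
      then have "j = 0 \<or> j = 1 \<or> j = 2 \<or> j = 3" by auto
      then show ?thesis by auto
    next
      case False then show ?thesis using * by auto
    qed
  qed
  have "norm (dec_q y) \<le> \<bar>y 0\<bar> + (\<bar>y 1\<bar> + (\<bar>y 2\<bar> + \<bar>y 3\<bar>))"
  proof -
    have "norm (y 2, y 3) \<le> \<bar>y 2\<bar> + \<bar>y 3\<bar>" using norm_Pair_le[of "y 2" "y 3"] by simp
    moreover have "norm (y 1, y 2, y 3) \<le> \<bar>y 1\<bar> + norm (y 2, y 3)" using norm_Pair_le[of "y 1" "(y 2, y 3)"] by simp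
    moreover have "norm (y 0, y 1, y 2, y 3) \<le> \<bar>y 0\<bar> + norm (y 1, y 2, y 3)" using norm_Pair_le[of "y 0" "(y 1, y 2, y 3)"] by simp
    ultimately show ?thesis unfolding dec_q_def by linarith
  qed
  then show "norm (dec_q y) \<le> (\<Sum>i<4. \<bar>y i\<bar>)" by (simp add: eval_nat_numeral add.assoc)
  fix x :: quat
  show "dec_q (enc_q x) = x" unfolding enc_q_def dec_q_def by simp
qed (use assms in \<open>auto simp: enc_q_def qassoc qunit1 qunit2 qinv_r qinv_l qinv_norm qnorm_mul qnorm\<close>)



theorem proposition3p5:
  fixes k :: nat
  assumes "k \<ge> 2"
  shows "orbit_space ((*) :: real \<Rightarrow> real \<Rightarrow> real) inverse {g. norm g = 1} k
           homeomorphic_space Euclidean_space (1 + k - 1)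
       \<and> orbit_space ((*) :: complex \<Rightarrow> complex \<Rightarrow> complex) inverse {g. norm g = 1} k
           homeomorphic_space Euclidean_space (2 + k - 1)
       \<and> orbit_space qmult qinv {g :: quat. norm g = 1} k
           homeomorphic_space Euclidean_space (4 + k - 1)"
proof -
  have r: "orbit_space ((*) :: real \<Rightarrow> real \<Rightarrow> real) inverse {g. norm g = 1} k
           homeomorphic_space Euclidean_space (1 + k - 1)"
    by (rule chainK.orbit_homeo'[OF chainK_real[OF assms]])
  have c: "orbit_space ((*) :: complex \<Rightarrow> complex \<Rightarrow> complex) inverse {g. norm g = 1} k
           homeomorphic_space Euclidean_space (2 + k - 1)"
    by (rule chainK.orbit_homeo'[OF chainK_complex[OF assms]])
  have q: "orbit_space qmult qinv {g :: quat. norm g = 1} k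
           homeomorphic_space Euclidean_space (4 + k - 1)"
    by (rule chainK.orbit_homeo'[OF chainK_quat[OF assms]])
  show ?thesis using r c q by blast
qed

end
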